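(* Let $A$ be a unital Banach algebra. The following are equivalent: (i) $A$ admits a character (a nonzero multiplicative linear functional $A\to\mathbb{C}$); (ii) there exists a nonzero Banach space that is a left function module over $A$; (iii) every (nonzero) Banach space $X$ admits a left $A$-module action making it a left function module over $A$. Moreover, for any character $\varphi$ of $A$ and any Banach space $X$, the action $a\cdot x=\varphi(a)x$ makes $X$ a left function module over $A$.
   Context: A left Banach $A$-module action satisfies $1\cdot x=x$ and $\|a\cdot x\|\le\|a\|\|x\|$; $X$ is a left function module over $A$ if there exist a compact Hausdorff space $K$, a linear isometry $i\colon X\to C(K)$ and a contractive unital homomorphism $\theta\colon A\to C(K)$ with $i(a\cdot x)=\theta(a)i(x)$ for all $a,x$. *)

theory Defs
  imports "HOL-Analysis.Analysis"
begin

text \<open>The distribution has no complex vector space class, so we add one: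
  a real normed vector space with a compatible complex scalar multiplication.\<close>

class complex_vector_sp = real_vector +
  fixes scaleC :: "complex \<Rightarrow> 'a \<Rightarrow> 'a" (infixr \<open>*\<^sub>C\<close> 75)
  assumes scaleC_add_right: "c *\<^sub>C (x + y) = c *\<^sub>C x + c *\<^sub>C y"
    and scaleC_add_left: "(c + d) *\<^sub>C x = c *\<^sub>C x + d *\<^sub>C x"
    and scaleC_scaleC: "c *\<^sub>C (d *\<^sub>C x) = (c * d) *\<^sub>C x"
    and scaleC_one: "1 *\<^sub>C x = x"
    and scaleR_scaleC: "r *\<^sub>R x = complex_of_real r *\<^sub>C x"

class complex_normed_vector_sp = complex_vector_sp + real_normed_vector +
  assumes norm_scaleC: "norm (c *\<^sub>C x) = cmod c * norm x"

class complex_banach_sp = complex_normed_vector_sp + complete_space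

class complex_banach_algebra_1 = complex_banach_sp + real_normed_algebra_1 +
  assumes scaleC_mult_left: "c *\<^sub>C (a * b) = (c *\<^sub>C a) * b"
    and scaleC_mult_right: "c *\<^sub>C (a * b) = a * (c *\<^sub>C b)"

instantiation complex :: complex_banach_sp
begin
definition scaleC_complex :: "complex \<Rightarrow> complex \<Rightarrow> complex" where
  "scaleC_complex c z = c * z"
instance
  by standard (auto simp: scaleC_complex_def algebra_simps norm_mult scaleR_conv_of_real)
end

definition is_character :: "('a::complex_banach_algebra_1 \<Rightarrow> complex) \<Rightarrow> bool" where
  "is_character \<phi> \<longleftrightarrow>
     (\<forall>a b. \<phi> (a + b) = \<phi> a + \<phi> b) \<and>
     (\<forall>c a. \<phi> (c *\<^sub>C a) = c * \<phi> a) \<and>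
     (\<forall>a b. \<phi> (a * b) = \<phi> a * \<phi> b) \<and>
     (\<exists>a. \<phi> a \<noteq> 0)"

definition left_banach_module_action ::
    "('a::complex_banach_algebra_1 \<Rightarrow> 'x::complex_banach_sp \<Rightarrow> 'x) \<Rightarrow> bool" where
  "left_banach_module_action act \<longleftrightarrow>
     (\<forall>a b x. act (a + b) x = act a x + act b x) \<and>
     (\<forall>c a x. act (c *\<^sub>C a) x = c *\<^sub>C act a x) \<and>
     (\<forall>a x y. act a (x + y) = act a x + act a y) \<and>
     (\<forall>a c x. act a (c *\<^sub>C x) = c *\<^sub>C act a x) \<and>
     (\<forall>a b x. act (a * b) x = act a (act b x)) \<and>
     (\<forall>x. act 1 x = x) \<and>
     (\<forall>a x. norm (act a x) \<le> norm a * norm x)"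

text \<open>Supremum norm on C(K), K a compact space given as a topology on a type.
  (For K empty, C(K) = {0} and the norm is 0.)\<close>
definition supnorm :: "'k topology \<Rightarrow> ('k \<Rightarrow> complex) \<Rightarrow> real" where
  "supnorm K f = (if topspace K = {} then 0 else (SUP k\<in>topspace K. cmod (f k)))"

text \<open>X (with the action act) is a left function module over A, witnessed by a
  compact Hausdorff space K whose points live in the type 'k. Elements of C(K)
  are the continuous maps K \<rightarrow> \<complex>, identified when they agree on topspace K.
  i is a linear isometry X \<rightarrow> C(K), \<theta> a contractive unital homomorphism
  A \<rightarrow> C(K), and i(a\<cdot>x) = \<theta>(a) i(x).\<close>
definition left_function_module ::
    "'k itself \<Rightarrow> ('a::complex_banach_algebra_1 \<Rightarrow> 'x::complex_banach_sp \<Rightarrow> 'x) \<Rightarrow> bool" where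
  "left_function_module _ act \<longleftrightarrow>
     left_banach_module_action act \<and>
     (\<exists>(K::'k topology) (i::'x \<Rightarrow> 'k \<Rightarrow> complex) (\<theta>::'a \<Rightarrow> 'k \<Rightarrow> complex).
        compact_space K \<and> Hausdorff_space K \<and>
        (\<forall>x. continuous_map K euclidean (i x)) \<and>
        (\<forall>x y. \<forall>k\<in>topspace K. i (x + y) k = i x k + i y k) \<and>
        (\<forall>c x. \<forall>k\<in>topspace K. i (c *\<^sub>C x) k = c * i x k) \<and>
        (\<forall>x. supnorm K (i x) = norm x) \<and>
        (\<forall>a. continuous_map K euclidean (\<theta> a)) \<and>
        (\<forall>a b. \<forall>k\<in>topspace K. \<theta> (a + b) k = \<theta> a k + \<theta> b k) \<and>
        (\<forall>c a. \<forall>k\<in>topspace K. \<theta> (c *\<^sub>C a) k = c * \<theta> a k) \<and>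
        (\<forall>a b. \<forall>k\<in>topspace K. \<theta> (a * b) k = \<theta> a k * \<theta> b k) \<and>
        (\<forall>k\<in>topspace K. \<theta> 1 k = 1) \<and>
        (\<forall>a. supnorm K (\<theta> a) \<le> norm a) \<and>
        (\<forall>a x. \<forall>k\<in>topspace K. i (act a x) k = \<theta> a k * i x k))"

end

theory Submission
  imports Defs
begin


instance complex_banach_sp \<subseteq> banach ..

lemma character_one:
  fixes \<phi> :: "'a::complex_banach_algebra_1 \<Rightarrow> complex"
  assumes "is_character \<phi>" shows "\<phi> 1 = 1"
proof -
  from assms obtain a0 where a0: "\<phi> a0 \<noteq> 0" and m: "\<And>a b. \<phi> (a*b) = \<phi> a * \<phi> b"
    unfolding is_character_def by blast
  have "\<phi> a0 = \<phi> a0 * \<phi> 1" using m[of a0 1] by simp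
  with a0 show ?thesis by simp
qed

lemma character_bound:
  fixes \<phi> :: "'a::complex_banach_algebra_1 \<Rightarrow> complex"
  assumes ch: "is_character \<phi>" shows "cmod (\<phi> a) \<le> norm a"
proof (rule ccontr)
  assume "\<not> ?thesis"
  hence lt: "norm a < cmod (\<phi> a)" by simp
  hence nz: "\<phi> a \<noteq> 0" by auto
  have add: "\<And>a b. \<phi> (a + b) = \<phi> a + \<phi> b" and sc: "\<And>c a. \<phi> (c *\<^sub>C a) = c * \<phi> a"
    and m: "\<And>a b. \<phi> (a*b) = \<phi> a * \<phi> b" using ch unfolding is_character_def by blast+
  define b where "b = inverse (\<phi> a) *\<^sub>C a"
  have pb: "\<phi> b = 1" using nz by (simp add: b_def sc)
  have "norm b = norm a / cmod (\<phi> a)"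
    by (simp add: b_def norm_scaleC norm_inverse divide_inverse)
  moreover have "norm a / cmod (\<phi> a) < 1"
    using lt nz by (metis divide_less_eq_1_pos zero_less_norm_iff)
  ultimately have nb: "norm b < 1" by linarith
  have summ: "summable (\<lambda>n. b ^ n)"
    by (rule summable_comparison_test[where g="\<lambda>n. norm b ^ n"])
       (auto intro: norm_power_ineq summable_geometric simp: nb)
  define s where "s = (\<Sum>n. b ^ n)"
  have "(\<Sum>n. b ^ Suc n) = s - 1" using suminf_split_head[OF summ] by (simp add: s_def)
  moreover have "(\<Sum>n. b ^ Suc n) = b * s"
    using suminf_mult[OF summ, of b] by (simp add: s_def)
  ultimately have "s = 1 + b * s" by (simp add: algebra_simps)
  hence "\<phi> s = \<phi> (1 + b * s)" by (rule arg_cong)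
  also have "\<phi> (1 + b * s) = \<phi> 1 + \<phi> b * \<phi> s" by (simp only: add m)
  finally have "\<phi> s = 1 + \<phi> s" by (simp only: pb character_one[OF ch] mult_1)
  thus False by simp
qed



lemma real_hb:
  fixes x0 :: "'x::real_normed_vector"
  shows "\<exists>g. (\<forall>x y. g (x+y) = g x + g y) \<and> (\<forall>c x. g (c *\<^sub>R x) = c * g x)
            \<and> (\<forall>x. g x \<le> norm x) \<and> g x0 = norm x0"
proof -
  define A where "A = {G :: ('x \<times> real) set. (x0, norm x0) \<in> G
     \<and> (\<forall>x a y b. (x,a)\<in>G \<longrightarrow> (y,b)\<in>G \<longrightarrow> (x+y,a+b)\<in>G)
     \<and> (\<forall>x a c. (x,a)\<in>G \<longrightarrow> (c *\<^sub>R x, c*a)\<in>G)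
     \<and> (\<forall>x a. (x,a)\<in>G \<longrightarrow> a \<le> norm x)}"
  have AI: "G \<in> A" if "(x0, norm x0) \<in> G" "\<And>x a y b. (x,a)\<in>G \<Longrightarrow> (y,b)\<in>G \<Longrightarrow> (x+y,a+b)\<in>G"
      "\<And>x a c. (x,a)\<in>G \<Longrightarrow> (c *\<^sub>R x, c*a)\<in>G" "\<And>x a. (x,a)\<in>G \<Longrightarrow> a \<le> norm x" for G
    using that unfolding A_def by simp
  have AD1: "(x0, norm x0) \<in> G" if "G \<in> A" for G using that unfolding A_def by simp
  have AD2: "(x+y,a+b)\<in>G" if "G \<in> A" "(x,a)\<in>G" "(y,b)\<in>G" for G x a y b
    using that unfolding A_def by simp
  have AD3: "(c *\<^sub>R x, c*a)\<in>G" if "G \<in> A" "(x,a)\<in>G" for G x a c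
    using that unfolding A_def by simp
  have AD4: "a \<le> norm x" if "G \<in> A" "(x,a)\<in>G" for G x a
    using that unfolding A_def by simp
  define G0 where "G0 = {(t *\<^sub>R x0, t * norm x0) | t. True}"
  have G0A: "G0 \<in> A"
  proof -
    have "(x0, norm x0) \<in> G0" unfolding G0_def by (rule CollectI, rule exI[of _ 1]) simp
    moreover have "\<forall>x a y b. (x,a)\<in>G0 \<longrightarrow> (y,b)\<in>G0 \<longrightarrow> (x+y,a+b)\<in>G0"
    proof (intro allI impI)
      fix x a y b assume "(x,a)\<in>G0" "(y,b)\<in>G0"
      then obtain s t where "x = s *\<^sub>R x0" "a = s * norm x0" "y = t *\<^sub>R x0" "b = t * norm x0"
        unfolding G0_def by auto
      thus "(x+y,a+b)\<in>G0" unfolding G0_def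
        by (intro CollectI exI[of _ "s+t"]) (simp add: scaleR_add_left algebra_simps)
    qed
    moreover have "\<forall>x a c. (x,a)\<in>G0 \<longrightarrow> (c *\<^sub>R x, c*a)\<in>G0"
    proof (intro allI impI)
      fix x a c assume "(x,a)\<in>G0"
      then obtain s where "x = s *\<^sub>R x0" "a = s * norm x0" unfolding G0_def by auto
      thus "(c *\<^sub>R x, c*a)\<in>G0" unfolding G0_def
        by (intro CollectI exI[of _ "c * s"]) simp
    qed
    moreover have "\<forall>x a. (x,a)\<in>G0 \<longrightarrow> a \<le> norm x"
    proof (intro allI impI)
      fix x a assume "(x,a)\<in>G0"
      then obtain s where "x = s *\<^sub>R x0" "a = s * norm x0" unfolding G0_def by auto
      thus "a \<le> norm x" by (simp add: mult_right_mono)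
    qed
    ultimately show ?thesis by (intro AI) blast+
  qed
  have "\<forall>C\<in>chains A. \<exists>U\<in>A. \<forall>X\<in>C. X \<subseteq> U"
  proof
    fix C assume C: "C \<in> chains A"
    hence CA: "C \<subseteq> A" and ch: "\<And>X Y. X\<in>C \<Longrightarrow> Y\<in>C \<Longrightarrow> X \<subseteq> Y \<or> Y \<subseteq> X"
      unfolding chains_def chain_subset_def by auto
    show "\<exists>U\<in>A. \<forall>X\<in>C. X \<subseteq> U"
    proof (cases "C = {}")
      case True thus ?thesis using G0A by blast
    next
      case False
      then obtain X0 where X0: "X0 \<in> C" by blast
      have "\<Union>C \<in> A"
      proof (rule AI)
        show "(x0, norm x0) \<in> \<Union>C" using AD1[OF subsetD[OF CA X0]] X0 by (rule UnionI[rotated])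
      next
        fix x a y b assume xa: "(x,a)\<in>\<Union>C" and yb: "(y,b)\<in>\<Union>C"
        from xa obtain X where X: "X\<in>C" "(x,a)\<in>X" by (rule UnionE)
        from yb obtain Y where Y: "Y\<in>C" "(y,b)\<in>Y" by (rule UnionE)
        show "(x+y,a+b)\<in>\<Union>C"
        proof (cases "X \<subseteq> Y")
          case True
          have "(x+y,a+b)\<in>Y" using AD2[OF subsetD[OF CA Y(1)] subsetD[OF True X(2)] Y(2)] .
          thus ?thesis using Y(1) by (rule UnionI[rotated])
        next
          case False
          hence "Y \<subseteq> X" using ch[OF X(1) Y(1)] by simp
          have "(x+y,a+b)\<in>X" using AD2[OF subsetD[OF CA X(1)] X(2) subsetD[OF \<open>Y \<subseteq> X\<close> Y(2)]] .
          thus ?thesis using X(1) by (rule UnionI[rotated])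
        qed
      next
        fix x a c assume xa: "(x,a)\<in>\<Union>C"
        from xa obtain X where X: "X\<in>C" "(x,a)\<in>X" by (rule UnionE)
        have "(c *\<^sub>R x, c*a)\<in>X" using AD3[OF subsetD[OF CA X(1)] X(2)] .
        thus "(c *\<^sub>R x, c*a)\<in>\<Union>C" using X(1) by (rule UnionI[rotated])
      next
        fix x a assume xa: "(x,a)\<in>\<Union>C"
        from xa obtain X where X: "X\<in>C" "(x,a)\<in>X" by (rule UnionE)
        show "a \<le> norm x" using AD4[OF subsetD[OF CA X(1)] X(2)] .
      qed
      moreover have "\<forall>X\<in>C. X \<subseteq> \<Union>C" by blast
      ultimately show ?thesis by blast
    qed
  qed
  from Zorn_Lemma2[OF this] obtain M where MA: "M \<in> A" and max: "\<And>X. X\<in>A \<Longrightarrow> M \<subseteq> X \<Longrightarrow> X = M"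
    by blast
  have Mx0: "(x0, norm x0) \<in> M" using AD1[OF MA] .
  have Madd: "\<And>x a y b. (x,a)\<in>M \<Longrightarrow> (y,b)\<in>M \<Longrightarrow> (x+y,a+b)\<in>M" using AD2[OF MA] .
  have Msc: "\<And>x a c. (x,a)\<in>M \<Longrightarrow> (c *\<^sub>R x, c*a)\<in>M" using AD3[OF MA] .
  have Mdom: "\<And>x a. (x,a)\<in>M \<Longrightarrow> a \<le> norm x" using AD4[OF MA] .
  have M0: "(0,0) \<in> M" using Msc[OF Mx0, of 0] by simp
  have func: "a = b" if "(x,a)\<in>M" "(x,b)\<in>M" for x a b
  proof -
    have "(x + (-1) *\<^sub>R x, a + (-1) * b) \<in> M" using Madd[OF that(1) Msc[OF that(2)]] .
    hence "a + (-1) * b \<le> norm (x + (-1) *\<^sub>R x)" by (rule Mdom)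
    hence "a - b \<le> 0" by simp
    moreover have "(x + (-1) *\<^sub>R x, b + (-1) * a) \<in> M" using Madd[OF that(2) Msc[OF that(1)]] .
    hence "b + (-1) * a \<le> norm (x + (-1) *\<^sub>R x)" by (rule Mdom)
    hence "b - a \<le> 0" by simp
    ultimately show ?thesis by simp
  qed
  have total: "\<exists>a. (y,a)\<in>M" for y
  proof (rule ccontr)
    assume ny: "\<not> (\<exists>a. (y,a)\<in>M)"
    define S where "S = {a - norm (x - y) | x a. (x,a)\<in>M}"
    define c where "c = Sup S"
    have bound: "a - norm (x-y) \<le> norm (z+y) - b" if "(x,a)\<in>M" "(z,b)\<in>M" for x a z b
    proof -
      have "a + b \<le> norm (x+z)" using Mdom[OF Madd[OF that]] .
      also have "x + z = (x - y) + (z + y)" by simp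
      also have "norm \<dots> \<le> norm (x-y) + norm (z+y)" by (rule norm_triangle_ineq)
      finally show ?thesis by simp
    qed
    have Sne: "S \<noteq> {}" using M0 unfolding S_def by blast
    have Sbdd: "bdd_above S"
    proof (rule bdd_aboveI)
      fix r assume "r \<in> S"
      then obtain x a where "r = a - norm (x - y)" "(x,a)\<in>M" unfolding S_def by blast
      thus "r \<le> norm (0 + y) - 0" using bound[OF _ M0] by simp
    qed
    have c_upper: "c \<le> norm (z+y) - b" if "(z,b)\<in>M" for z b
      unfolding c_def by (rule cSup_least[OF Sne]) (use bound[OF _ that] in \<open>auto simp: S_def\<close>)
    have c_lower: "a - norm (x-y) \<le> c" if "(x,a)\<in>M" for x a
      unfolding c_def by (rule cSup_upper[OF _ Sbdd]) (use that in \<open>auto simp: S_def\<close>)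
    define G' where "G' = {(x + t *\<^sub>R y, a + t*c) | x a t. (x,a)\<in>M}"
    have G'A: "G' \<in> A"
    proof -
      have "(x0, norm x0) \<in> G'" unfolding G'_def using Mx0
        by (intro CollectI exI[of _ x0] exI[of _ "norm x0"] exI[of _ 0]) simp
      moreover have "\<forall>x a y b. (x,a)\<in>G' \<longrightarrow> (y,b)\<in>G' \<longrightarrow> (x+y,a+b)\<in>G'"
      proof (intro allI impI)
        fix x a x' a' assume "(x,a)\<in>G'" "(x',a')\<in>G'"
        then obtain u b t u' b' t' where H: "(u,b)\<in>M" "x = u + t *\<^sub>R y" "a = b + t*c"
            "(u',b')\<in>M" "x' = u' + t' *\<^sub>R y" "a' = b' + t'*c"
          unfolding G'_def by blast
        have m: "(u+u', b+b')\<in>M" using Madd H(1) H(4) .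
        have e1: "x + x' = (u+u') + (t+t') *\<^sub>R y" using H by (simp add: algebra_simps scaleR_add_left)
        have e2: "a + a' = (b+b') + (t+t')*c" using H by (simp add: algebra_simps)
        show "(x+x',a+a')\<in>G'" unfolding G'_def mem_Collect_eq
          by (intro exI[of _ "u+u'"] exI[of _ "b+b'"] exI[of _ "t+t'"]) (simp add: e1 e2 m)
      qed
      moreover have "\<forall>x a d. (x,a)\<in>G' \<longrightarrow> (d *\<^sub>R x, d*a)\<in>G'"
      proof (intro allI impI)
        fix x a d assume "(x,a)\<in>G'"
        then obtain u b t where H: "(u,b)\<in>M" "x = u + t *\<^sub>R y" "a = b + t*c"
          unfolding G'_def by blast
        have m: "(d *\<^sub>R u, d*b)\<in>M" using Msc H(1) .
        have e1: "d *\<^sub>R x = d *\<^sub>R u + (d*t) *\<^sub>R y" using H by (simp add: scaleR_add_right)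
        have e2: "d * a = d*b + (d*t)*c" using H by (simp add: algebra_simps)
        show "(d *\<^sub>R x, d*a)\<in>G'" unfolding G'_def mem_Collect_eq
          by (intro exI[of _ "d *\<^sub>R u"] exI[of _ "d*b"] exI[of _ "d*t"]) (simp add: e1 e2 m)
      qed
      moreover have "\<forall>x a. (x,a)\<in>G' \<longrightarrow> a \<le> norm x"
      proof (intro allI impI)
        fix x a assume "(x,a)\<in>G'"
        then obtain u b t where ub: "(u,b)\<in>M" and xa: "x = u + t *\<^sub>R y" "a = b + t*c"
          unfolding G'_def by blast
        show "a \<le> norm x"
        proof (cases "t = 0")
          case True thus ?thesis using xa Mdom[OF ub] by simp
        next
          case False
          show ?thesis
          proof (cases "t > 0")
            case True
            define v where "v = (1/t) *\<^sub>R u"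
            have vM: "(v, (1/t)*b) \<in> M" unfolding v_def by (rule Msc[OF ub])
            have "c \<le> norm (v+y) - (1/t)*b" by (rule c_upper[OF vM])
            hence "t * c \<le> t * (norm (v+y) - (1/t)*b)" using True by (simp add: mult_left_mono)
            also have "\<dots> = t * norm (v+y) - b" using True by (simp add: algebra_simps)
            also have "t * norm (v+y) = norm (t *\<^sub>R (v+y))" using True by simp
            also have "t *\<^sub>R (v+y) = x" using True by (simp add: v_def xa scaleR_add_right)
            finally show ?thesis using xa by simp
          next
            case False
            hence tn: "t < 0" using \<open>t \<noteq> 0\<close> by simp
            define s where "s = - t"
            have sp: "s > 0" using tn by (simp add: s_def)
            define v where "v = (1/s) *\<^sub>R u"
            have vM: "(v, (1/s)*b) \<in> M" unfolding v_def by (rule Msc[OF ub])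
            have "(1/s)*b - norm (v-y) \<le> c" by (rule c_lower[OF vM])
            hence c1: "s * ((1/s)*b - norm (v-y)) \<le> s * c" using sp by (simp add: mult_left_mono)
            have c2: "s * ((1/s)*b - norm (v-y)) = b - s * norm (v-y)" using sp by (simp add: algebra_simps)
            have c3: "s * norm (v-y) = norm (s *\<^sub>R (v-y))" using sp by simp
            have c4: "s *\<^sub>R (v-y) = x" using sp by (simp add: v_def xa s_def scaleR_diff_right)
            have c5: "a = b - s * c" using xa by (simp add: s_def)
            have c6: "s * norm (v-y) = norm x" using c3 c4 by simp
            from c1 c2 c5 c6 show ?thesis by linarith
          qed
        qed
      qed
      ultimately show ?thesis by (intro AI) blast+
    qed
    have "M \<subseteq> G'" unfolding G'_def
    proof
      fix p assume "p \<in> M"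
      then obtain x a where "p = (x,a)" "(x,a)\<in>M" by (cases p) auto
      thus "p \<in> {(x + t *\<^sub>R y, a + t*c) | x a t. (x,a)\<in>M}"
        by (intro CollectI exI[of _ x] exI[of _ a] exI[of _ 0]) simp
    qed
    hence "G' = M" using max[OF G'A] by simp
    moreover have "(y, c) \<in> G'" unfolding G'_def using M0
      by (intro CollectI exI[of _ 0] exI[of _ 0] exI[of _ 1]) simp
    ultimately show False using ny by blast
  qed
  define g where "g y = (THE a. (y,a)\<in>M)" for y
  have gM: "(y, g y) \<in> M" for y
  proof -
    obtain a where "(y,a)\<in>M" using total by blast
    hence "\<exists>!a. (y,a)\<in>M" using func by blast
    thus ?thesis unfolding g_def by (rule theI')
  qed
  have "\<forall>x y. g (x+y) = g x + g y" using func[OF gM Madd[OF gM gM]] by blast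
  moreover have "\<forall>c x. g (c *\<^sub>R x) = c * g x" using func[OF gM Msc[OF gM]] by blast
  moreover have "\<forall>x. g x \<le> norm x" using Mdom[OF gM] by blast
  moreover have "g x0 = norm x0" using func[OF gM Mx0] .
  ultimately show ?thesis by blast
qed



lemma complex_hb:
  fixes x0 :: "'x::complex_normed_vector_sp"
  shows "\<exists>f. (\<forall>x y. f (x+y) = f x + f y) \<and> (\<forall>c x. f (c *\<^sub>C x) = c * f x)
            \<and> (\<forall>x. cmod (f x) \<le> norm x) \<and> cmod (f x0) = norm x0"
proof -
  from real_hb[of x0] obtain g where G: "(\<forall>x y. g (x+y) = g x + g y) \<and> (\<forall>c x. g (c *\<^sub>R x) = c * g x)
            \<and> (\<forall>x. g x \<le> norm x) \<and> g x0 = norm x0" by (rule exE)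
  have gadd: "\<And>x y. g (x+y) = g x + g y" using G by blast
  have gsc: "\<And>c x. g (c *\<^sub>R x) = c * g x" using G by blast
  have gle: "\<And>x. g x \<le> norm x" using G by blast
  have gx0: "g x0 = norm x0" using G by blast
  have decomp: "c *\<^sub>C x = Re c *\<^sub>R x + Im c *\<^sub>R (\<i> *\<^sub>C x)" for c and x :: 'x
  proof -
    have ceq: "c = complex_of_real (Re c) + complex_of_real (Im c) * \<i>" by (simp add: complex_eq_iff)
    have "c *\<^sub>C x = (complex_of_real (Re c) + complex_of_real (Im c) * \<i>) *\<^sub>C x"
      using ceq by (rule arg_cong)
    also have "\<dots> = complex_of_real (Re c) *\<^sub>C x + complex_of_real (Im c) *\<^sub>C (\<i> *\<^sub>C x)"
      by (simp add: scaleC_add_left scaleC_scaleC)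
    also have "\<dots> = Re c *\<^sub>R x + Im c *\<^sub>R (\<i> *\<^sub>C x)" by (simp add: scaleR_scaleC)
    finally show ?thesis .
  qed
  have gC: "g (c *\<^sub>C x) = Re c * g x + Im c * g (\<i> *\<^sub>C x)" for c x
    using decomp[of c x] by (simp add: gadd gsc)
  define f where "f x = Complex (g x) (- g (\<i> *\<^sub>C x))" for x
  have fRe: "Re (f x) = g x" for x by (simp add: f_def)
  have fadd: "f (x+y) = f x + f y" for x y
    by (simp add: f_def scaleC_add_right gadd complex_eq_iff)
  have fsc: "f (c *\<^sub>C x) = c * f x" for c x
  proof -
    have e: "\<i> *\<^sub>C (c *\<^sub>C x) = (\<i> * c) *\<^sub>C x" by (simp add: scaleC_scaleC)
    have r1: "g (c *\<^sub>C x) = Re c * g x + Im c * g (\<i> *\<^sub>C x)" by (rule gC)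
    have r2: "g (\<i> *\<^sub>C (c *\<^sub>C x)) = - Im c * g x + Re c * g (\<i> *\<^sub>C x)"
      unfolding e gC[of "\<i> * c" x] by simp
    show ?thesis unfolding f_def r1 r2 by (simp add: complex_eq_iff algebra_simps)
  qed
  have fbound: "cmod (f x) \<le> norm x" for x
  proof (cases "f x = 0")
    case True thus ?thesis by simp
  next
    case False
    define z where "z = f x"
    have zn: "cmod z \<noteq> 0" using False by (simp add: z_def)
    define u where "u = cnj z / complex_of_real (cmod z)"
    have uz: "u * z = complex_of_real (cmod z)"
    proof -
      have "u * z = (z * cnj z) / complex_of_real (cmod z)" by (simp add: u_def field_simps)
      also have "z * cnj z = complex_of_real (cmod z ^ 2)" by (rule complex_norm_square[symmetric])
      finally show ?thesis using zn by (simp add: power2_eq_square)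
    qed
    have cu: "cmod u = 1" using zn by (simp add: u_def norm_divide)
    have "cmod z = Re (u * z)" using uz by simp
    also have "u * z = f (u *\<^sub>C x)" by (simp add: fsc z_def)
    also have "Re (f (u *\<^sub>C x)) = g (u *\<^sub>C x)" by (rule fRe)
    also have "\<dots> \<le> norm (u *\<^sub>C x)" by (rule gle)
    also have "\<dots> = norm x" by (simp add: norm_scaleC cu)
    finally show ?thesis by (simp add: z_def)
  qed
  have "norm x0 \<le> cmod (f x0)" using complex_Re_le_cmod[of "f x0"] by (simp add: fRe gx0)
  hence "cmod (f x0) = norm x0" using fbound[of x0] by simp
  thus ?thesis using fadd fsc fbound by blast
qed



lemma char_module:
  fixes \<phi> :: "'a::complex_banach_algebra_1 \<Rightarrow> complex"
  assumes ch: "is_character \<phi>"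
  shows "left_banach_module_action (\<lambda>a (x::'x::complex_banach_sp). \<phi> a *\<^sub>C x)
       \<and> left_function_module TYPE('x \<Rightarrow> complex) (\<lambda>a (x::'x). \<phi> a *\<^sub>C x)"
proof -
  have add: "\<And>a b. \<phi> (a + b) = \<phi> a + \<phi> b" and sc: "\<And>c a. \<phi> (c *\<^sub>C a) = c * \<phi> a"
    and m: "\<And>a b. \<phi> (a*b) = \<phi> a * \<phi> b" using ch unfolding is_character_def by blast+
  have one: "\<phi> 1 = 1" by (rule character_one[OF ch])
  have bnd: "\<And>a. cmod (\<phi> a) \<le> norm a" by (rule character_bound[OF ch])
  have act: "left_banach_module_action (\<lambda>a (x::'x). \<phi> a *\<^sub>C x)"
    unfolding left_banach_module_action_def
  proof (intro conjI allI)
    fix a b and x :: 'x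
    show "\<phi> (a + b) *\<^sub>C x = \<phi> a *\<^sub>C x + \<phi> b *\<^sub>C x" by (simp add: add scaleC_add_left)
  next
    fix c a and x :: 'x
    show "\<phi> (c *\<^sub>C a) *\<^sub>C x = c *\<^sub>C (\<phi> a *\<^sub>C x)" by (simp add: sc scaleC_scaleC)
  next
    fix a and x y :: 'x
    show "\<phi> a *\<^sub>C (x + y) = \<phi> a *\<^sub>C x + \<phi> a *\<^sub>C y" by (simp add: scaleC_add_right)
  next
    fix a c and x :: 'x
    show "\<phi> a *\<^sub>C (c *\<^sub>C x) = c *\<^sub>C (\<phi> a *\<^sub>C x)" by (simp add: scaleC_scaleC mult.commute)
  next
    fix a b and x :: 'x
    show "\<phi> (a * b) *\<^sub>C x = \<phi> a *\<^sub>C (\<phi> b *\<^sub>C x)" by (simp add: m scaleC_scaleC)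
  next
    fix x :: 'x
    show "\<phi> 1 *\<^sub>C x = x" by (simp add: one scaleC_one)
  next
    fix a and x :: 'x
    show "norm (\<phi> a *\<^sub>C x) \<le> norm a * norm x"
      by (simp add: norm_scaleC mult_right_mono bnd)
  qed
  define P where "P = product_topology (\<lambda>_::'x. (euclidean :: complex topology)) UNIV"
  define B where "B = {f :: 'x \<Rightarrow> complex. (\<forall>x y. f (x+y) = f x + f y) \<and> (\<forall>c x. f (c *\<^sub>C x) = c * f x)
                      \<and> (\<forall>x. cmod (f x) \<le> norm x)}"
  define K where "K = subtopology P B"
  have topP: "topspace P = UNIV" unfolding P_def by simp
  have topK: "topspace K = B" unfolding K_def by (simp add: topP)
  have proj: "continuous_map P euclidean (\<lambda>f. f x)" for x :: 'x
    unfolding P_def using continuous_map_product_projection[of x UNIV "\<lambda>_. euclidean"] by simp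
  have projc: "continuous_map P euclidean (\<lambda>f. c * f x)" for c and x :: 'x
  proof -
    have "continuous_map euclidean euclidean (\<lambda>z::complex. c * z)" by (simp add: continuous_intros)
    from continuous_map_compose[OF proj this] show ?thesis by (simp add: o_def)
  qed
  have B0: "(\<lambda>_. 0) \<in> B" unfolding B_def by simp
  have pre0: "closedin P {f \<in> topspace P. h f \<in> {0}}" if "continuous_map P euclidean h"
    for h :: "('x \<Rightarrow> complex) \<Rightarrow> complex"
    by (rule closedin_continuous_map_preimage[OF that]) simp
  have closedB: "closedin P B"
  proof -
    define S1 where "S1 = (\<Inter>p\<in>(UNIV :: ('x \<times> 'x) set). {f \<in> topspace P. f (fst p + snd p) - (f (fst p) + f (snd p)) \<in> {0}})"
    define S2 where "S2 = (\<Inter>p\<in>(UNIV :: (complex \<times> 'x) set). {f \<in> topspace P. f (fst p *\<^sub>C snd p) - fst p * f (snd p) \<in> {0}})"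
    define S3 where "S3 = (\<Inter>x\<in>(UNIV :: 'x set). {f \<in> topspace P. f x \<in> cball 0 (norm x)})"
    have "B = S1 \<inter> S2 \<inter> S3"
      unfolding B_def S1_def S2_def S3_def topP by (auto simp: dist_norm)
    moreover have "closedin P S1" unfolding S1_def
      by (rule closedin_Inter, simp, erule imageE, simp only:,
          intro pre0 continuous_map_diff continuous_map_add proj)
    moreover have "closedin P S2" unfolding S2_def
      by (rule closedin_Inter, simp, erule imageE, simp only:,
          intro pre0 continuous_map_diff proj projc)
    moreover have "closedin P S3" unfolding S3_def
      by (rule closedin_Inter, simp, erule imageE, simp only:,
          rule closedin_continuous_map_preimage[OF proj], simp)
    ultimately show ?thesis by (simp add: closedin_Int)
  qed
  have compK: "compact_space K"
  proof -
    have "compactin P (PiE UNIV (\<lambda>x::'x. cball (0::complex) (norm x)))"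
      unfolding P_def by (simp add: compactin_PiE)
    moreover have "B \<subseteq> PiE UNIV (\<lambda>x::'x. cball (0::complex) (norm x))"
      unfolding B_def by auto
    ultimately have "compactin P B" using closedB by (rule closed_compactin)
    thus ?thesis unfolding K_def by (rule compact_space_subtopology)
  qed
  have hausK: "Hausdorff_space K"
    unfolding K_def P_def
    by (intro Hausdorff_space_subtopology) (simp add: Hausdorff_space_product_topology)
  have supi: "supnorm K (\<lambda>f. f x) = norm x" for x :: 'x
  proof -
    obtain f0 where f0: "(\<forall>x y. f0 (x+y) = f0 x + f0 y) \<and> (\<forall>c x. f0 (c *\<^sub>C x) = c * f0 x)
            \<and> (\<forall>x. cmod (f0 x) \<le> norm x) \<and> cmod (f0 x) = norm x"
      using complex_hb[of x] by (rule exE)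
    have f0B: "f0 \<in> B" unfolding B_def using f0 by blast
    have "(SUP f\<in>B. cmod (f x)) = norm x"
    proof (rule cSup_eq_maximum)
      show "norm x \<in> (\<lambda>f. cmod (f x)) ` B" using f0B f0 by (metis image_eqI)
    next
      fix r assume "r \<in> (\<lambda>f. cmod (f x)) ` B"
      thus "r \<le> norm x" unfolding B_def by auto
    qed
    thus ?thesis unfolding supnorm_def topK using B0 by auto
  qed
  have supt: "supnorm K (\<lambda>f. \<phi> a) \<le> norm a" for a
    unfolding supnorm_def topK using B0 bnd by auto
  have "left_function_module TYPE('x \<Rightarrow> complex) (\<lambda>a (x::'x). \<phi> a *\<^sub>C x)"
    unfolding left_function_module_def
  proof (intro conjI act exI[of _ K] exI[of _ "\<lambda>x f. f x"] exI[of _ "\<lambda>a f. \<phi> a"])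
    show "compact_space K" by (rule compK)
    show "Hausdorff_space K" by (rule hausK)
    show "\<forall>x. continuous_map K euclidean (\<lambda>f. f x)"
      unfolding K_def using proj continuous_map_from_subtopology by blast
    show "\<forall>x y. \<forall>k\<in>topspace K. k (x + y) = k x + k y" unfolding topK B_def by blast
    show "\<forall>c x. \<forall>k\<in>topspace K. k (c *\<^sub>C x) = c * k x" unfolding topK B_def by blast
    show "\<forall>x. supnorm K (\<lambda>f. f x) = norm x" using supi by blast
    show "\<forall>a. continuous_map K euclidean (\<lambda>f. \<phi> a)" by simp
    show "\<forall>a b. \<forall>k\<in>topspace K. \<phi> (a + b) = \<phi> a + \<phi> b" using add by blast
    show "\<forall>c a. \<forall>k\<in>topspace K. \<phi> (c *\<^sub>C a) = c * \<phi> a" using sc by blast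
    show "\<forall>a b. \<forall>k\<in>topspace K. \<phi> (a * b) = \<phi> a * \<phi> b" using m by blast
    show "\<forall>k\<in>topspace K. \<phi> 1 = 1" using one by blast
    show "\<forall>a. supnorm K (\<lambda>f. \<phi> a) \<le> norm a" using supt by blast
    show "\<forall>a x. \<forall>k\<in>topspace K. k (\<phi> a *\<^sub>C x) = \<phi> a * k x" unfolding topK B_def by blast
  qed
  with act show ?thesis by blast
qed

theorem mainTheorem6:
  fixes A_type :: "'a::complex_banach_algebra_1 itself"
    and X_type :: "'x::complex_banach_sp itself"
    and K_type :: "'k itself"
  shows
    \<comment> \<open>(ii) \<Longrightarrow> (i): any nonzero Banach space X (any type 'x) that is a left function
        module over A (with K in any type 'k) forces a character\<close>
    "((\<exists>x::'x. x \<noteq> 0) \<and> (\<exists>act::'a \<Rightarrow> 'x \<Rightarrow> 'x. left_function_module TYPE('k) act)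
        \<longrightarrow> (\<exists>\<phi>::'a \<Rightarrow> complex. is_character \<phi>))
     \<and>
     \<comment> \<open>(i) \<Longrightarrow> (ii): some nonzero Banach space (here \<complex> itself) is a function module\<close>
     ((\<exists>\<phi>::'a \<Rightarrow> complex. is_character \<phi>)
        \<longrightarrow> (\<exists>act::'a \<Rightarrow> complex \<Rightarrow> complex. left_function_module TYPE(complex \<Rightarrow> complex) act))
     \<and>
     \<comment> \<open>(i) \<Longrightarrow> (iii): every Banach space X admits a module action making it a function module\<close>
     ((\<exists>\<phi>::'a \<Rightarrow> complex. is_character \<phi>)
        \<longrightarrow> (\<exists>act::'a \<Rightarrow> 'x \<Rightarrow> 'x. left_banach_module_action act
               \<and> left_function_module TYPE('x \<Rightarrow> complex) act))
     \<and>
     \<comment> \<open>Moreover: for every character \<phi> and every Banach space X, a\<cdot>x = \<phi>(a)x works\<close>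
     (\<forall>\<phi>::'a \<Rightarrow> complex. is_character \<phi> \<longrightarrow>
        left_banach_module_action (\<lambda>a (x::'x). \<phi> a *\<^sub>C x)
        \<and> left_function_module TYPE('x \<Rightarrow> complex) (\<lambda>a (x::'x). \<phi> a *\<^sub>C x))"
proof (intro conjI)
  show "(\<exists>x::'x. x \<noteq> 0) \<and> (\<exists>act::'a \<Rightarrow> 'x \<Rightarrow> 'x. left_function_module TYPE('k) act)
        \<longrightarrow> (\<exists>\<phi>::'a \<Rightarrow> complex. is_character \<phi>)"
  proof
    assume H: "(\<exists>x::'x. x \<noteq> 0) \<and> (\<exists>act::'a \<Rightarrow> 'x \<Rightarrow> 'x. left_function_module TYPE('k) act)"
    then obtain x0 :: 'x where x0: "x0 \<noteq> 0" by blast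
    from H obtain act :: "'a \<Rightarrow> 'x \<Rightarrow> 'x" where "left_function_module TYPE('k) act" by blast
    then obtain K :: "'k topology" and i :: "'x \<Rightarrow> 'k \<Rightarrow> complex" and \<theta> :: "'a \<Rightarrow> 'k \<Rightarrow> complex"
      where sup: "\<forall>x. supnorm K (i x) = norm x"
        and tadd: "\<forall>a b. \<forall>k\<in>topspace K. \<theta> (a + b) k = \<theta> a k + \<theta> b k"
        and tsc: "\<forall>c a. \<forall>k\<in>topspace K. \<theta> (c *\<^sub>C a) k = c * \<theta> a k"
        and tm: "\<forall>a b. \<forall>k\<in>topspace K. \<theta> (a * b) k = \<theta> a k * \<theta> b k"
        and t1: "\<forall>k\<in>topspace K. \<theta> 1 k = 1"
      unfolding left_function_module_def by (elim conjE exE) blast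
    have "topspace K \<noteq> {}"
    proof
      assume "topspace K = {}"
      hence "norm x0 = 0" using sup unfolding supnorm_def by simp
      thus False using x0 by simp
    qed
    then obtain k where k: "k \<in> topspace K" by blast
    have "is_character (\<lambda>a. \<theta> a k)"
      unfolding is_character_def using tadd tsc tm t1 k by (intro conjI allI exI[of _ 1]) auto
    thus "\<exists>\<phi>::'a \<Rightarrow> complex. is_character \<phi>" by blast
  qed
next
  show "(\<exists>\<phi>::'a \<Rightarrow> complex. is_character \<phi>)
        \<longrightarrow> (\<exists>act::'a \<Rightarrow> complex \<Rightarrow> complex. left_function_module TYPE(complex \<Rightarrow> complex) act)"
  proof
    assume "\<exists>\<phi>::'a \<Rightarrow> complex. is_character \<phi>"
    then obtain \<phi> :: "'a \<Rightarrow> complex" where "is_character \<phi>" by blast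
    from char_module[OF this, where 'x=complex] show "\<exists>act::'a \<Rightarrow> complex \<Rightarrow> complex. left_function_module TYPE(complex \<Rightarrow> complex) act"
      by blast
  qed
next
  show "(\<exists>\<phi>::'a \<Rightarrow> complex. is_character \<phi>)
        \<longrightarrow> (\<exists>act::'a \<Rightarrow> 'x \<Rightarrow> 'x. left_banach_module_action act
               \<and> left_function_module TYPE('x \<Rightarrow> complex) act)"
  proof
    assume "\<exists>\<phi>::'a \<Rightarrow> complex. is_character \<phi>"
    then obtain \<phi> :: "'a \<Rightarrow> complex" where "is_character \<phi>" by blast
    from char_module[OF this, where 'x='x] show "\<exists>act::'a \<Rightarrow> 'x \<Rightarrow> 'x. left_banach_module_action act
               \<and> left_function_module TYPE('x \<Rightarrow> complex) act"
      by blast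
  qed
next
  show "\<forall>\<phi>::'a \<Rightarrow> complex. is_character \<phi> \<longrightarrow>
        left_banach_module_action (\<lambda>a (x::'x). \<phi> a *\<^sub>C x)
        \<and> left_function_module TYPE('x \<Rightarrow> complex) (\<lambda>a (x::'x). \<phi> a *\<^sub>C x)"
    using char_module by blast
qed

end
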